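(* Let $\{E^A_{\alpha,k}\}$ be an informationally complete $(N_A,M_A)$ POVM on $\mathbb{C}^{d_A}$ with parameter $x_A$ and $\{E^B_{\beta,j}\}$ an informationally complete $(N_B,M_B)$ POVM on $\mathbb{C}^{d_B}$ with parameter $x_B$. For every separable state $\rho_{AB}$ on $\mathbb{C}^{d_A}\otimes\mathbb{C}^{d_B}$, $$\sum_{\alpha=1}^{N_A}\sum_{k=1}^{M_A}\sum_{\beta=1}^{N_B}\sum_{j=1}^{M_B}\mathrm{tr}\big[(E^A_{\alpha,k}\otimes E^B_{\beta,j})\rho_{AB}\big]^2\le\frac{(d_A-1)(d_A^2+M_A^2x_A)}{d_AM_A(M_A-1)}\cdot\frac{(d_B-1)(d_B^2+M_B^2x_B)}{d_BM_B(M_B-1)}.$$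
   Context: An $(N,M)$ POVM on $\mathbb{C}^d$ (with $M\ge 2$) consists of $N$ POVMs $\{E_{\alpha,k}\mid k=1,\dots,M\}$, $\alpha=1,\dots,N$, satisfying $\mathrm{tr}(E_{\alpha,k})=d/M$, $\mathrm{tr}(E_{\alpha,k}^2)=x$, $\mathrm{tr}(E_{\alpha,k}E_{\alpha,l})=\frac{d-Mx}{M(M-1)}$ for $l\ne k$, and $\mathrm{tr}(E_{\alpha,k}E_{\beta,l})=d/M^2$ for $\beta\ne\alpha$, where $\frac{d}{M^2}<x\le\min\{\frac{d^2}{M^2},\frac dM\}$; it is informationally complete if $N(M-1)=d^2-1$. A state is separable if it is a convex combination of product states $\rho_A^i\otimes\rho_B^i$. *)

theory Defs
  imports "HOL-Analysis.Analysis"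
begin

definition hermitian :: "complex^'n::finite^'n \<Rightarrow> bool" where
  "hermitian A \<longleftrightarrow> (\<forall>i j. A $ i $ j = cnj (A $ j $ i))"

definition psd :: "complex^'n::finite^'n \<Rightarrow> bool" where
  "psd A \<longleftrightarrow> hermitian A \<and>
     (\<forall>v :: complex^'n. let q = (\<Sum>i\<in>UNIV. \<Sum>j\<in>UNIV. cnj (v $ i) * A $ i $ j * v $ j)
                        in Im q = 0 \<and> Re q \<ge> 0)"

definition density :: "complex^'n::finite^'n \<Rightarrow> bool" where
  "density \<rho> \<longleftrightarrow> psd \<rho> \<and> trace \<rho> = 1"

definition kron :: "complex^'n::finite^'n \<Rightarrow> complex^'m::finite^'m \<Rightarrow> complex^('n::finite \<times> 'm::finite)^('n \<times> 'm)" where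
  "kron A B = (\<chi> p q. A $ fst p $ fst q * B $ snd p $ snd q)"

definition separable :: "complex^('n::finite \<times> 'm::finite)^('n \<times> 'm) \<Rightarrow> bool" where
  "separable \<rho> \<longleftrightarrow> (\<exists>(r::nat) (p::nat \<Rightarrow> real) \<rho>A \<rho>B.
      (\<forall>i<r. p i \<ge> 0 \<and> density (\<rho>A i) \<and> density (\<rho>B i)) \<and>
      (\<Sum>i<r. p i) = 1 \<and>
      \<rho> = (\<Sum>i<r. (\<chi> u v. complex_of_real (p i) * kron (\<rho>A i) (\<rho>B i) $ u $ v)))"

text \<open>(N,M) POVM on C^d, d = CARD('n), with parameter x; indices alpha < N, k < M (0-based).\<close>
definition NM_POVM :: "nat \<Rightarrow> nat \<Rightarrow> real \<Rightarrow> (nat \<Rightarrow> nat \<Rightarrow> complex^'n::finite^'n) \<Rightarrow> bool" where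
  "NM_POVM N M x E \<longleftrightarrow>
     (let d = real CARD('n) in
      M \<ge> 2 \<and>
      d / real M ^ 2 < x \<and> x \<le> min (d ^ 2 / real M ^ 2) (d / real M) \<and>
      (\<forall>a<N. \<forall>k<M. psd (E a k)) \<and>
      (\<forall>a<N. (\<Sum>k<M. E a k) = mat 1) \<and>
      (\<forall>a<N. \<forall>k<M. trace (E a k) = complex_of_real (d / real M)) \<and>
      (\<forall>a<N. \<forall>k<M. trace (E a k ** E a k) = complex_of_real x) \<and>
      (\<forall>a<N. \<forall>k<M. \<forall>l<M. l \<noteq> k \<longrightarrow>
          trace (E a k ** E a l) = complex_of_real ((d - real M * x) / (real M * (real M - 1)))) \<and>
      (\<forall>a<N. \<forall>b<N. \<forall>k<M. \<forall>l<M. b \<noteq> a \<longrightarrow>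
          trace (E a k ** E b l) = complex_of_real (d / real M ^ 2)))"

definition IC_NM_POVM :: "nat \<Rightarrow> nat \<Rightarrow> real \<Rightarrow> (nat \<Rightarrow> nat \<Rightarrow> complex^'n::finite^'n) \<Rightarrow> bool" where
  "IC_NM_POVM N M x E \<longleftrightarrow> NM_POVM N M x E \<and> N * (M - 1) = CARD('n) ^ 2 - 1"

end

theory Submission
  imports Defs
begin


lemma inner_herm:
  fixes A B :: "complex^'n::finite^'n"
  assumes "hermitian A"
  shows "inner A B = Re (trace (A ** B))"
proof -
  have "Re (trace (A ** B)) = (\<Sum>i\<in>UNIV. \<Sum>j\<in>UNIV. Re (A$i$j * B$j$i))"
    by (simp add: trace_def matrix_matrix_mult_def)
  also have "\<dots> = (\<Sum>i\<in>UNIV. \<Sum>j\<in>UNIV. inner (A$j$i) (B$j$i))"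
  proof (intro sum.cong refl)
    fix i j
    have "A$i$j = cnj (A$j$i)" using assms unfolding hermitian_def by blast
    then show "Re (A$i$j * B$j$i) = inner (A$j$i) (B$j$i)"
      by (simp add: inner_complex_def)
  qed
  also have "\<dots> = inner A B"
    by (subst sum.swap) (simp add: inner_vec_def)
  finally show ?thesis by simp
qed

lemma trace_herm_real:
  fixes A B :: "complex^'n::finite^'n"
  assumes "hermitian A" "hermitian B"
  shows "Im (trace (A ** B)) = 0"
proof -
  have "cnj (trace (A ** B)) = (\<Sum>i\<in>UNIV. \<Sum>j\<in>UNIV. cnj (A$i$j) * cnj (B$j$i))"
    by (simp add: trace_def matrix_matrix_mult_def)
  also have "\<dots> = (\<Sum>i\<in>UNIV. \<Sum>j\<in>UNIV. A$j$i * B$i$j)"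
    using assms unfolding hermitian_def by (intro sum.cong refl) (metis complex_cnj_cnj)
  also have "\<dots> = trace (B ** A)"
    by (simp add: trace_def matrix_matrix_mult_def mult.commute)
  also have "\<dots> = trace (A ** B)" by (rule trace_mul_sym)
  finally show ?thesis by (metis Reals_cnj_iff complex_is_Real_iff)
qed

lemma psd_herm: "psd A \<Longrightarrow> hermitian A" by (simp add: psd_def)



lemma sum_two_support:
  fixes f :: "'n::finite \<Rightarrow> 'b::comm_monoid_add"
  assumes "i \<noteq> j" "\<And>k. k \<noteq> i \<Longrightarrow> k \<noteq> j \<Longrightarrow> f k = 0"
  shows "sum f UNIV = f i + f j"
proof -
  have "sum f UNIV = sum f {i, j}"
    by (rule sum.mono_neutral_right) (use assms in auto)
  then show ?thesis using assms by simp
qed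

lemma sum_one_support:
  fixes f :: "'n::finite \<Rightarrow> 'b::comm_monoid_add"
  assumes "\<And>k. k \<noteq> i \<Longrightarrow> f k = 0"
  shows "sum f UNIV = f i"
proof -
  have "sum f UNIV = sum f {i}"
    by (rule sum.mono_neutral_right) (use assms in auto)
  then show ?thesis by simp
qed

lemma quad_real_lemma:
  fixes a c s :: real
  assumes "\<And>t. 0 \<le> t^2 * a - 2 * t * s + s * c" "s \<ge> 0" "a \<ge> 0" "c \<ge> 0"
  shows "s \<le> a * c"
proof (cases "s = 0")
  case True then show ?thesis using assms by simp
next
  case False
  show ?thesis
  proof (cases "a = 0")
    case True
    define T where "T = (s * c + 1) / (2 * s)"
    have "0 \<le> T^2 * a - 2 * T * s + s * c" by (rule assms(1))
    also have "\<dots> = -1" using True False by (simp add: T_def field_simps)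
    finally show ?thesis by simp
  next
    case False
    have "0 \<le> (s/a)^2 * a - 2 * (s/a) * s + s * c" by (rule assms(1))
    also have "\<dots> = s * (c - s/a)" using False by (simp add: field_simps power2_eq_square)
    finally have "s/a \<le> c" using \<open>s \<noteq> 0\<close> assms(2)
      by (simp add: zero_le_mult_iff)
    then show ?thesis using False assms(3) by (simp add: divide_le_eq mult.commute)
  qed
qed

lemma psd_quad:
  fixes A :: "complex^'n::finite^'n"
  assumes "psd A"
  shows "Re (\<Sum>i\<in>UNIV. \<Sum>j\<in>UNIV. cnj (v $ i) * A $ i $ j * v $ j) \<ge> 0"
  using assms unfolding psd_def Let_def by blast

lemma psd_diag:
  fixes A :: "complex^'n::finite^'n"
  assumes "psd A"
  shows "Re (A$i$i) \<ge> 0" "Im (A$i$i) = 0"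
proof -
  have "Re (\<Sum>k\<in>UNIV. \<Sum>l\<in>UNIV. cnj (axis i 1 $ k) * A $ k $ l * axis i 1 $ l) \<ge> 0"
    by (rule psd_quad[OF assms])
  moreover have "(\<Sum>k\<in>UNIV. \<Sum>l\<in>UNIV. cnj (axis i (1::complex) $ k) * A $ k $ l * axis i 1 $ l) = A$i$i"
  proof -
    have inner: "(\<Sum>l\<in>UNIV. cnj (axis i (1::complex) $ k) * A $ k $ l * axis i 1 $ l) = cnj (axis i (1::complex) $ k) * A $ k $ i" for k
      by (subst sum_one_support[of i]) (auto simp: axis_def)
    show ?thesis unfolding inner
      by (subst sum_one_support[of i]) (auto simp: axis_def)
  qed
  ultimately show "Re (A$i$i) \<ge> 0" by simp
  have "A$i$i = cnj (A$i$i)" using psd_herm[OF assms] unfolding hermitian_def by blast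
  then show "Im (A$i$i) = 0" by (metis Reals_cnj_iff complex_is_Real_iff)
qed

lemma psd_offdiag:
  fixes A :: "complex^'n::finite^'n"
  assumes "psd A" "i \<noteq> j"
  shows "(cmod (A$i$j))^2 \<le> Re (A$i$i) * Re (A$j$j)"
proof (rule quad_real_lemma)
  fix t :: real
  define w where "w = A$i$j"
  define v :: "complex^'n" where "v = (\<chi> k. if k = i then complex_of_real t else if k = j then - cnj w else 0)"
  have h: "A$j$i = cnj w" using psd_herm[OF assms(1)] unfolding hermitian_def w_def by blast
  have ii: "A$i$i = complex_of_real (Re (A$i$i))" using psd_diag[OF assms(1)] by (simp add: complex_eq_iff)
  have jj: "A$j$j = complex_of_real (Re (A$j$j))" using psd_diag[OF assms(1)] by (simp add: complex_eq_iff)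
  have q: "(\<Sum>k\<in>UNIV. \<Sum>l\<in>UNIV. cnj (v $ k) * A $ k $ l * v $ l)
     = (cnj (v$i) * A$i$i * v$i + cnj (v$i) * A$i$j * v$j) + (cnj (v$j) * A$j$i * v$i + cnj (v$j) * A$j$j * v$j)"
  proof -
    have inner: "(\<Sum>l\<in>UNIV. cnj (v $ k) * A $ k $ l * v $ l) = cnj (v $ k) * A $ k $ i * v $ i + cnj (v $ k) * A $ k $ j * v $ j" for k
      by (rule sum_two_support[OF assms(2)]) (simp add: v_def)
    show ?thesis unfolding inner
      by (rule sum_two_support[OF assms(2)]) (simp add: v_def)
  qed
  have "Re (\<Sum>k\<in>UNIV. \<Sum>l\<in>UNIV. cnj (v $ k) * A $ k $ l * v $ l) \<ge> 0"
    by (rule psd_quad[OF assms(1)])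
  also have "Re (\<Sum>k\<in>UNIV. \<Sum>l\<in>UNIV. cnj (v $ k) * A $ k $ l * v $ l)
     = t^2 * Re (A$i$i) - 2 * t * (Re w^2 + Im w^2) + (Re w^2 + Im w^2) * Re (A$j$j)"
    unfolding q using assms(2)
    apply (simp add: v_def h flip: w_def)
    apply (subst ii, subst jj)
    apply (simp add: power2_eq_square algebra_simps)
    done
  finally show "0 \<le> t^2 * Re (A$i$i) - 2 * t * (cmod (A$i$j))^2 + (cmod (A$i$j))^2 * Re (A$j$j)"
    by (simp add: w_def cmod_power2)
qed (use psd_diag[OF assms(1)] in auto)



lemma density_norm:
  fixes A :: "complex^'n::finite^'n"
  assumes "density A"
  shows "inner A A \<le> 1"
proof -
  have psd: "psd A" and tr: "trace A = 1" using assms by (auto simp: density_def)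
  have "inner A A = (\<Sum>i\<in>UNIV. \<Sum>j\<in>UNIV. (cmod (A$i$j))^2)"
    by (simp add: inner_vec_def power2_norm_eq_inner)
  also have "\<dots> \<le> (\<Sum>i\<in>UNIV. \<Sum>j\<in>UNIV. Re (A$i$i) * Re (A$j$j))"
  proof (intro sum_mono)
    fix i j
    show "(cmod (A$i$j))^2 \<le> Re (A$i$i) * Re (A$j$j)"
    proof (cases "i = j")
      case True
      then show ?thesis using psd_diag[OF psd, of i] by (simp add: cmod_power2 flip: power2_eq_square)
    next
      case False
      then show ?thesis using psd_offdiag[OF psd] by blast
    qed
  qed
  also have "\<dots> = (Re (trace A))^2"
    by (simp add: trace_def power2_eq_square sum_distrib_left sum_distrib_right mult.commute)
  also have "\<dots> = 1" using tr by simp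
  finally show ?thesis .
qed



lemma bessel_gen:
  fixes f :: "'i \<Rightarrow> 'j \<Rightarrow> 'v::real_inner" and X :: 'v
  assumes fin: "finite A" "finite B" and lam: "lam > 0"
    and gram: "inner (\<Sum>a\<in>A. \<Sum>k\<in>B. inner (f a k) X *\<^sub>R f a k) (\<Sum>a\<in>A. \<Sum>k\<in>B. inner (f a k) X *\<^sub>R f a k)
              \<le> lam * (\<Sum>a\<in>A. \<Sum>k\<in>B. (inner (f a k) X)^2)"
  shows "(\<Sum>a\<in>A. \<Sum>k\<in>B. (inner (f a k) X)^2) \<le> lam * inner X X"
proof -
  define Z where "Z = (\<Sum>a\<in>A. \<Sum>k\<in>B. inner (f a k) X *\<^sub>R f a k)"
  define T where "T = (\<Sum>a\<in>A. \<Sum>k\<in>B. (inner (f a k) X)^2)"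
  have ZX: "inner Z X = T"
    unfolding Z_def T_def by (simp add: inner_sum_left power2_eq_square)
  have "0 \<le> inner (X - (1/lam) *\<^sub>R Z) (X - (1/lam) *\<^sub>R Z)" by simp
  also have "\<dots> = inner X X - 2 * (1/lam) * inner Z X + (1/lam)^2 * inner Z Z"
    by (simp add: inner_diff_left inner_diff_right inner_commute power2_eq_square)
  also have "\<dots> \<le> inner X X - 2 * (1/lam) * T + (1/lam)^2 * (lam * T)"
    using gram lam unfolding ZX Z_def[symmetric] T_def[symmetric]
    by (intro add_left_mono mult_left_mono) auto
  also have "\<dots> = inner X X - T / lam" using lam by (simp add: field_simps power2_eq_square)
  finally show ?thesis using lam unfolding T_def[symmetric] by (simp add: field_simps)
qed

lemma gram_block:
  fixes f :: "'i \<Rightarrow> 'j \<Rightarrow> 'v::real_inner" and t :: "'i \<Rightarrow> 'j \<Rightarrow> real"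
  assumes fin: "finite A" "finite B"
    and g: "\<And>a b k l. a \<in> A \<Longrightarrow> b \<in> A \<Longrightarrow> k \<in> B \<Longrightarrow> l \<in> B \<Longrightarrow>
            inner (f a k) (f b l) = (if a = b then (if k = l then c else c') else 0)"
    and s0: "\<And>a. a \<in> A \<Longrightarrow> (\<Sum>k\<in>B. t a k) = 0"
  shows "inner (\<Sum>a\<in>A. \<Sum>k\<in>B. t a k *\<^sub>R f a k) (\<Sum>a\<in>A. \<Sum>k\<in>B. t a k *\<^sub>R f a k)
         = (c - c') * (\<Sum>a\<in>A. \<Sum>k\<in>B. (t a k)^2)"
proof -
  have "inner (\<Sum>a\<in>A. \<Sum>k\<in>B. t a k *\<^sub>R f a k) (\<Sum>a\<in>A. \<Sum>k\<in>B. t a k *\<^sub>R f a k)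
     = (\<Sum>a\<in>A. \<Sum>k\<in>B. \<Sum>b\<in>A. \<Sum>l\<in>B. t a k * t b l * inner (f a k) (f b l))"
  proof -
    have r: "inner (f a k) (\<Sum>b\<in>A. \<Sum>l\<in>B. t b l *\<^sub>R f b l) = (\<Sum>b\<in>A. \<Sum>l\<in>B. t b l * inner (f a k) (f b l))" for a k
      by (simp add: inner_sum_right)
    show ?thesis
      by (simp only: inner_sum_left inner_scaleR_left r sum_distrib_left mult.assoc)
  qed
  also have "\<dots> = (\<Sum>a\<in>A. \<Sum>k\<in>B. \<Sum>l\<in>B. t a k * t a l * (if k = l then c else c'))"
  proof (intro sum.cong refl)
    fix a k assume a: "a \<in> A" and k: "k \<in> B"
    have "(\<Sum>b\<in>A. \<Sum>l\<in>B. t a k * t b l * inner (f a k) (f b l))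
        = (\<Sum>b\<in>A. if b = a then (\<Sum>l\<in>B. t a k * t a l * (if k = l then c else c')) else 0)"
      by (intro sum.cong refl) (auto simp: g a k)
    also have "\<dots> = (\<Sum>l\<in>B. t a k * t a l * (if k = l then c else c'))"
      using a fin by (simp add: sum.delta)
    finally show "(\<Sum>b\<in>A. \<Sum>l\<in>B. t a k * t b l * inner (f a k) (f b l)) = (\<Sum>l\<in>B. t a k * t a l * (if k = l then c else c'))" .
  qed
  also have "\<dots> = (\<Sum>a\<in>A. \<Sum>k\<in>B. (c - c') * (t a k)^2)"
  proof (rule sum.cong[OF refl])
    fix a assume a: "a \<in> A"
    have "(\<Sum>k\<in>B. \<Sum>l\<in>B. t a k * t a l * (if k = l then c else c'))
        = (\<Sum>k\<in>B. \<Sum>l\<in>B. (t a k * t a l * c' + (if k = l then (c - c') * (t a k)^2 else 0)))"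
      by (intro sum.cong refl) (auto simp: algebra_simps power2_eq_square)
    also have "\<dots> = (\<Sum>k\<in>B. t a k * c' * (\<Sum>l\<in>B. t a l)) + (\<Sum>k\<in>B. (c - c') * (t a k)^2)"
      using fin by (simp add: sum.distrib sum_distrib_left sum_distrib_right mult_ac)
    also have "\<dots> = (\<Sum>k\<in>B. (c - c') * (t a k)^2)" using s0[OF a] by simp
    finally show "(\<Sum>k\<in>B. \<Sum>l\<in>B. t a k * t a l * (if k = l then c else c')) = (\<Sum>k\<in>B. (c - c') * (t a k)^2)" .
  qed
  also have "\<dots> = (c - c') * (\<Sum>a\<in>A. \<Sum>k\<in>B. (t a k)^2)"
    by (simp add: sum_distrib_left)
  finally show ?thesis .
qed



lemma herm_mat1: "hermitian (mat 1 :: complex^'n::finite^'n)"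
  by (simp add: hermitian_def mat_def)

lemma single_bound:
  fixes E :: "nat \<Rightarrow> nat \<Rightarrow> complex^'n::finite^'n" and \<rho> :: "complex^'n^'n"
  assumes ic: "IC_NM_POVM N M x E" and dens: "density \<rho>"
  shows "(\<Sum>a<N. \<Sum>k<M. (Re (trace (E a k ** \<rho>)))^2)
    \<le> (real CARD('n) - 1) * (real CARD('n) ^ 2 + real M ^ 2 * x) / (real CARD('n) * real M * (real M - 1))"
proof -
  define d where "d = real CARD('n)"
  have povm: "NM_POVM N M x E" and NM: "N * (M - 1) = CARD('n)^2 - 1" using ic by (auto simp: IC_NM_POVM_def)
  have M2: "M \<ge> 2" and xlow: "d / real M ^ 2 < x"
    and psdE: "\<And>a k. a < N \<Longrightarrow> k < M \<Longrightarrow> psd (E a k)"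
    and sumE: "\<And>a. a < N \<Longrightarrow> (\<Sum>k<M. E a k) = mat 1"
    and trE: "\<And>a k. a < N \<Longrightarrow> k < M \<Longrightarrow> trace (E a k) = complex_of_real (d / real M)"
    and EE: "\<And>a k. a < N \<Longrightarrow> k < M \<Longrightarrow> trace (E a k ** E a k) = complex_of_real x"
    and EEl: "\<And>a k l. a < N \<Longrightarrow> k < M \<Longrightarrow> l < M \<Longrightarrow> l \<noteq> k \<Longrightarrow>
          trace (E a k ** E a l) = complex_of_real ((d - real M * x) / (real M * (real M - 1)))"
    and EEb: "\<And>a b k l. a < N \<Longrightarrow> b < N \<Longrightarrow> k < M \<Longrightarrow> l < M \<Longrightarrow> b \<noteq> a \<Longrightarrow>
          trace (E a k ** E b l) = complex_of_real (d / real M ^ 2)"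
    using povm unfolding NM_POVM_def Let_def d_def by auto
  have hE: "\<And>a k. a < N \<Longrightarrow> k < M \<Longrightarrow> hermitian (E a k)" using psdE psd_herm by blast
  have d1: "d \<ge> 1" unfolding d_def by simp
  have Mr: "real M \<ge> 2" using M2 by simp
  define I where "I = (mat 1 :: complex^'n^'n)"
  have hI: "hermitian I" unfolding I_def by (rule herm_mat1)
  have trrho: "trace \<rho> = 1" using dens by (simp add: density_def)
  have EI: "inner (E a k) I = d / real M" if "a < N" "k < M" for a k
    using inner_herm[OF hE[OF that], of I] trE[OF that] by (simp add: I_def)
  have II: "inner I I = d"
    using inner_herm[OF hI, of I] by (simp add: I_def trace_I d_def)
  have Irho: "inner I \<rho> = 1"
    using inner_herm[OF hI, of \<rho>] trrho by (simp add: I_def)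
  define p where "p a k = inner (E a k) \<rho>" for a k
  have p_eq: "Re (trace (E a k ** \<rho>)) = p a k" if "a < N" "k < M" for a k
    using inner_herm[OF hE[OF that], of \<rho>] by (simp add: p_def)
  define F where "F a k = E a k - (1 / real M) *\<^sub>R I" for a k
  define X where "X = \<rho> - (1 / d) *\<^sub>R I"
  define c where "c = x - d / real M ^ 2"
  define c' where "c' = (d - real M * x) / (real M * (real M - 1)) - d / real M ^ 2"
  have FF: "inner (F a k) (F b l) = inner (E a k) (E b l) - d / real M ^ 2"
    if "a < N" "k < M" "b < N" "l < M" for a k b l
  proof -
    have "inner (F a k) (F b l) = inner (E a k) (E b l) - (1 / real M) * inner (E a k) I
        - (1 / real M) * inner I (E b l) + (1 / real M) * (1 / real M) * inner I I"
      unfolding F_def by (simp add: inner_diff_left inner_diff_right algebra_simps)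
    also have "inner I (E b l) = d / real M" using EI[OF that(3,4)] by (simp add: inner_commute)
    finally have eq: "inner (F a k) (F b l) = inner (E a k) (E b l) - (1 / real M) * (d / real M)
        - (1 / real M) * (d / real M) + (1 / real M) * (1 / real M) * d"
      using EI[OF that(1,2)] II by simp
    have u1: "(1 / real M) * (d / real M) = d / real M ^ 2" by (simp add: power2_eq_square)
    have u2: "(1 / real M) * (1 / real M) * d = d / real M ^ 2" by (simp add: power2_eq_square)
    show ?thesis unfolding eq u1 u2 by simp
  qed
  have g: "inner (F a k) (F b l) = (if a = b then (if k = l then c else c') else 0)"
    if "a \<in> {..<N}" "b \<in> {..<N}" "k \<in> {..<M}" "l \<in> {..<M}" for a b k l
  proof -
    have ab: "a < N" "b < N" "k < M" "l < M" using that by auto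
    have EE': "inner (E a k) (E b l) = Re (trace (E a k ** E b l))" using inner_herm[OF hE[OF ab(1,3)]] by simp
    show ?thesis
      using EE[OF ab(1,3)] EEl[OF ab(1,3,4)] EEb[OF ab(1,2,3,4)]
      unfolding FF[OF ab(1,3,2,4)] EE' c_def c'_def by auto
  qed
  define t where "t a k = inner (F a k) X" for a k
  have t_eq: "t a k = p a k - 1 / real M" if "a < N" "k < M" for a k
  proof -
    have "t a k = inner (E a k) \<rho> - (1 / d) * inner (E a k) I - (1 / real M) * inner I \<rho> + (1 / real M) * (1 / d) * inner I I"
      unfolding t_def F_def X_def by (simp add: inner_diff_left inner_diff_right algebra_simps)
    moreover have "(1 / d) * (d / real M) = 1 / real M" "(1 / real M) * (1 / d) * d = 1 / real M"
      using d1 by auto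
    ultimately show ?thesis using EI[OF that] II Irho unfolding p_def by simp
  qed
  have s0: "(\<Sum>k\<in>{..<M}. t a k) = 0" if "a \<in> {..<N}" for a
  proof -
    have "(\<Sum>k\<in>{..<M}. t a k) = (\<Sum>k<M. p a k) - real M * (1 / real M)"
      using that by (simp add: t_eq sum_subtractf)
    also have "(\<Sum>k<M. p a k) = inner (\<Sum>k<M. E a k) \<rho>" by (simp add: p_def inner_sum_left)
    also have "\<dots> = 1" using sumE[of a] that Irho by (simp add: I_def)
    finally show ?thesis using Mr by simp
  qed
  define lam where "lam = c - c'"
  have lam_eq: "lam = c * real M / (real M - 1)"
    unfolding lam_def c_def c'_def using Mr by (simp add: field_simps power2_eq_square)
  have cpos: "c > 0" unfolding c_def using xlow by simp
  have lampos: "lam > 0" unfolding lam_eq using cpos Mr by simp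
  have gb: "inner (\<Sum>a\<in>{..<N}. \<Sum>k\<in>{..<M}. t a k *\<^sub>R F a k) (\<Sum>a\<in>{..<N}. \<Sum>k\<in>{..<M}. t a k *\<^sub>R F a k)
     = lam * (\<Sum>a\<in>{..<N}. \<Sum>k\<in>{..<M}. (t a k)^2)"
    unfolding lam_def by (rule gram_block[OF _ _ g s0]) auto
  have T_le: "(\<Sum>a\<in>{..<N}. \<Sum>k\<in>{..<M}. (t a k)^2) \<le> lam * inner X X"
    unfolding t_def by (rule bessel_gen[OF _ _ lampos]) (use gb in \<open>auto simp: t_def\<close>)
  have XX: "inner X X = inner \<rho> \<rho> - 1 / d"
  proof -
    have "inner X X = inner \<rho> \<rho> - (1 / d) * inner \<rho> I - (1 / d) * inner I \<rho> + (1 / d) * (1 / d) * inner I I"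
      unfolding X_def by (simp add: inner_diff_left inner_diff_right algebra_simps)
    moreover have "(1 / d) * (1 / d) * d = 1 / d" using d1 by auto
    ultimately show ?thesis using II Irho by (simp add: inner_commute[of \<rho> I])
  qed
  have XX1: "inner X X \<le> 1 - 1 / d" unfolding XX using density_norm[OF dens] by simp
  have "(\<Sum>a<N. \<Sum>k<M. (Re (trace (E a k ** \<rho>)))^2) = (\<Sum>a<N. \<Sum>k<M. (t a k + 1 / real M)^2)"
    by (intro sum.cong refl) (simp add: p_eq t_eq)
  also have "\<dots> = (\<Sum>a<N. \<Sum>k<M. (t a k)^2) + (2 / real M) * (\<Sum>a<N. \<Sum>k<M. t a k) + real N * real M * (1 / real M)^2"
    by (simp add: power2_sum sum.distrib sum_distrib_left mult_ac sum_divide_distrib)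
  also have "(\<Sum>a<N. \<Sum>k<M. t a k) = 0" using s0 by simp
  also have "(\<Sum>a<N. \<Sum>k<M. (t a k)^2) \<le> lam * (1 - 1 / d)"
    using T_le XX1 lampos by (meson mult_left_mono less_imp_le order_trans)
  finally have main: "(\<Sum>a<N. \<Sum>k<M. (Re (trace (E a k ** \<rho>)))^2) \<le> lam * (1 - 1 / d) + real N / real M"
    using Mr by (simp add: power2_eq_square)
  have Nr: "real N * (real M - 1) = d^2 - 1"
  proof -
    have "real (N * (M - 1)) = real (CARD('n)^2 - 1)" using NM by simp
    moreover have "CARD('n)^2 \<ge> 1" by simp
    ultimately show ?thesis using M2 unfolding d_def by (simp add: of_nat_diff)
  qed
  have "lam * (1 - 1 / d) + real N / real M = (d - 1) * (d ^ 2 + real M ^ 2 * x) / (d * real M * (real M - 1))"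
  proof -
    define D where "D = d * real M * (real M - 1)"
    have Dpos: "D > 0" unfolding D_def using Mr d1 by simp
    have lam2: "lam = (real M ^ 2 * x - d) / (real M * (real M - 1))"
      unfolding lam_eq c_def using Mr by (simp add: field_simps power2_eq_square)
    have e1: "lam * (1 - 1 / d) * D = (real M ^ 2 * x - d) * (d - 1)"
      unfolding lam2 D_def using Mr d1 by (simp add: field_simps)
    have e2': "real N / real M * D = d * (real N * (real M - 1))"
      unfolding D_def using Mr d1 by simp
    have e2: "real N / real M * D = d * (d^2 - 1)" unfolding e2' Nr ..
    have e3: "(d - 1) * (d ^ 2 + real M ^ 2 * x) / (d * real M * (real M - 1)) * D = (d - 1) * (d ^ 2 + real M ^ 2 * x)"
      unfolding D_def using Mr d1 by simp
    have "(lam * (1 - 1 / d) + real N / real M) * D = (d - 1) * (d ^ 2 + real M ^ 2 * x) / (d * real M * (real M - 1)) * D"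
      unfolding e3 distrib_right e1 e2 by (simp add: algebra_simps power2_eq_square)
    then show ?thesis using Dpos by (metis mult_right_cancel less_irrefl)
  qed
  then show ?thesis using main unfolding d_def by simp
qed



lemma jensen_sq:
  fixes p y :: "nat \<Rightarrow> real"
  assumes "\<And>i. i < r \<Longrightarrow> p i \<ge> 0" "(\<Sum>i<r. p i) = 1"
  shows "(\<Sum>i<r. p i * y i)^2 \<le> (\<Sum>i<r. p i * (y i)^2)"
proof -
  define m where "m = (\<Sum>i<r. p i * y i)"
  have "0 \<le> (\<Sum>i<r. p i * (y i - m)^2)"
    using assms(1) by (intro sum_nonneg) auto
  also have "\<dots> = (\<Sum>i<r. p i * (y i)^2) - 2 * m * (\<Sum>i<r. p i * y i) + m^2 * (\<Sum>i<r. p i)"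
    by (simp add: power2_diff algebra_simps sum.distrib sum_subtractf sum_distrib_left sum_distrib_right)
  also have "\<dots> = (\<Sum>i<r. p i * (y i)^2) - m^2"
    using assms(2) unfolding m_def[symmetric] by (simp add: power2_eq_square)
  finally show ?thesis unfolding m_def by simp
qed

lemma sum_UNIV_pair:
  "(\<Sum>p\<in>(UNIV::('a::finite \<times> 'b::finite) set). f p) = (\<Sum>x\<in>UNIV. \<Sum>y\<in>UNIV. f (x, y))"
  by (simp add: sum.cartesian_product flip: UNIV_Times_UNIV)

lemma kron_trace:
  fixes A C :: "complex^'a::finite^'a" and B D :: "complex^'b::finite^'b"
  shows "trace (kron A B ** kron C D) = trace (A ** C) * trace (B ** D)"
proof -
  have "trace (kron A B ** kron C D) = (\<Sum>p1\<in>UNIV. \<Sum>p2\<in>UNIV. \<Sum>q1\<in>UNIV. \<Sum>q2\<in>UNIV.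
          A$p1$q1 * B$p2$q2 * (C$q1$p1 * D$q2$p2))"
    by (simp add: trace_def matrix_matrix_mult_def kron_def sum_UNIV_pair)
  also have "\<dots> = (\<Sum>p1\<in>UNIV. \<Sum>q1\<in>UNIV. \<Sum>p2\<in>UNIV. \<Sum>q2\<in>UNIV.
          (A$p1$q1 * C$q1$p1) * (B$p2$q2 * D$q2$p2))"
    by (intro sum.cong refl, subst sum.swap) (simp add: mult_ac)
  also have "\<dots> = (\<Sum>p1\<in>UNIV. \<Sum>q1\<in>UNIV. (A$p1$q1 * C$q1$p1) * (\<Sum>p2\<in>UNIV. \<Sum>q2\<in>UNIV. B$p2$q2 * D$q2$p2))"
    by (simp only: sum_distrib_left)
  also have "\<dots> = (\<Sum>p1\<in>UNIV. \<Sum>q1\<in>UNIV. A$p1$q1 * C$q1$p1) * (\<Sum>p2\<in>UNIV. \<Sum>q2\<in>UNIV. B$p2$q2 * D$q2$p2)"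
    by (simp only: sum_distrib_right)
  also have "\<dots> = trace (A ** C) * trace (B ** D)"
    by (simp add: trace_def matrix_matrix_mult_def)
  finally show ?thesis .
qed

lemma trace_mult_sum:
  fixes K :: "complex^'n::finite^'n"
  shows "trace (K ** (\<Sum>i<r. L i)) = (\<Sum>i<r. trace (K ** L i))"
proof -
  have "trace (K ** (\<Sum>i<r. L i)) = (\<Sum>a\<in>UNIV. \<Sum>b\<in>UNIV. \<Sum>i<r. K$a$b * L i $b$a)"
    by (simp add: trace_def matrix_matrix_mult_def sum_distrib_left)
  also have "\<dots> = (\<Sum>a\<in>UNIV. \<Sum>i<r. \<Sum>b\<in>UNIV. K$a$b * L i $b$a)"
    by (rule sum.cong[OF refl], rule sum.swap)
  also have "\<dots> = (\<Sum>i<r. \<Sum>a\<in>UNIV. \<Sum>b\<in>UNIV. K$a$b * L i $b$a)"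
    by (rule sum.swap)
  also have "\<dots> = (\<Sum>i<r. trace (K ** L i))"
    by (simp add: trace_def matrix_matrix_mult_def)
  finally show ?thesis .
qed

lemma trace_mult_scal:
  fixes K :: "complex^'n::finite^'n"
  shows "trace (K ** (\<chi> u v. c * L $ u $ v)) = c * trace (K ** L)"
  by (simp add: trace_def matrix_matrix_mult_def sum_distrib_left mult_ac)



lemma sum_swap5:
  "(\<Sum>i\<in>I. \<Sum>a\<in>A. \<Sum>k\<in>K. \<Sum>b\<in>B. \<Sum>j\<in>J. f i a k b j) = (\<Sum>a\<in>A. \<Sum>k\<in>K. \<Sum>b\<in>B. \<Sum>j\<in>J. \<Sum>i\<in>I. f i a k b j)"
proof -
  have "(\<Sum>i\<in>I. \<Sum>a\<in>A. \<Sum>k\<in>K. \<Sum>b\<in>B. \<Sum>j\<in>J. f i a k b j) = (\<Sum>a\<in>A. \<Sum>i\<in>I. \<Sum>k\<in>K. \<Sum>b\<in>B. \<Sum>j\<in>J. f i a k b j)"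
    by (rule sum.swap)
  also have "\<dots> = (\<Sum>a\<in>A. \<Sum>k\<in>K. \<Sum>i\<in>I. \<Sum>b\<in>B. \<Sum>j\<in>J. f i a k b j)"
    by (rule sum.cong[OF refl], rule sum.swap)
  also have "\<dots> = (\<Sum>a\<in>A. \<Sum>k\<in>K. \<Sum>b\<in>B. \<Sum>i\<in>I. \<Sum>j\<in>J. f i a k b j)"
    by (rule sum.cong[OF refl], rule sum.cong[OF refl], rule sum.swap)
  also have "\<dots> = (\<Sum>a\<in>A. \<Sum>k\<in>K. \<Sum>b\<in>B. \<Sum>j\<in>J. \<Sum>i\<in>I. f i a k b j)"
    by (rule sum.cong[OF refl], rule sum.cong[OF refl], rule sum.cong[OF refl], rule sum.swap)
  finally show ?thesis .
qed

theorem mainTheorem4: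
  fixes EA :: "nat \<Rightarrow> nat \<Rightarrow> complex^'a^'a"
    and EB :: "nat \<Rightarrow> nat \<Rightarrow> complex^'b^'b"
    and \<rho> :: "complex^('a \<times> 'b)^('a \<times> 'b)"
    and NA MA NB MB :: nat and xA xB :: real
  assumes "IC_NM_POVM NA MA xA EA"
    and "IC_NM_POVM NB MB xB EB"
    and "separable \<rho>"
  shows "(\<Sum>a<NA. \<Sum>k<MA. \<Sum>b<NB. \<Sum>j<MB.
            (Re (trace (kron (EA a k) (EB b j) ** \<rho>))) ^ 2)
         \<le> ((real CARD('a) - 1) * (real CARD('a) ^ 2 + real MA ^ 2 * xA)
              / (real CARD('a) * real MA * (real MA - 1)))
           * ((real CARD('b) - 1) * (real CARD('b) ^ 2 + real MB ^ 2 * xB)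
              / (real CARD('b) * real MB * (real MB - 1)))"
proof -
  obtain r :: nat and p :: "nat \<Rightarrow> real" and \<rho>A :: "nat \<Rightarrow> complex^'a^'a" and \<rho>B :: "nat \<Rightarrow> complex^'b^'b" where
    hp: "\<forall>i<r. p i \<ge> 0 \<and> density (\<rho>A i) \<and> density (\<rho>B i)" and
    ps: "(\<Sum>i<r. p i) = 1" and
    rho: "\<rho> = (\<Sum>i<r. (\<chi> u v. complex_of_real (p i) * kron (\<rho>A i) (\<rho>B i) $ u $ v))"
    using assms(3) unfolding separable_def
    by blast
  define CA where "CA = (real CARD('a) - 1) * (real CARD('a) ^ 2 + real MA ^ 2 * xA)
              / (real CARD('a) * real MA * (real MA - 1))"
  define CB where "CB = (real CARD('b) - 1) * (real CARD('b) ^ 2 + real MB ^ 2 * xB)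
              / (real CARD('b) * real MB * (real MB - 1))"
  define \<alpha> where "\<alpha> i a k = Re (trace (EA a k ** \<rho>A i))" for i a k
  define \<beta> where "\<beta> i b j = Re (trace (EB b j ** \<rho>B i))" for i b j
  have hEA: "hermitian (EA a k)" if "a < NA" "k < MA" for a k
    using assms(1) that unfolding IC_NM_POVM_def NM_POVM_def Let_def by (auto intro: psd_herm)
  have hEB: "hermitian (EB b j)" if "b < NB" "j < MB" for b j
    using assms(2) that unfolding IC_NM_POVM_def NM_POVM_def Let_def by (auto intro: psd_herm)
  have hA: "hermitian (\<rho>A i)" "hermitian (\<rho>B i)" if "i < r" for i
    using hp that by (auto simp: density_def intro: psd_herm)
  have key: "Re (trace (kron (EA a k) (EB b j) ** \<rho>)) = (\<Sum>i<r. p i * (\<alpha> i a k * \<beta> i b j))"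
    if ak: "a < NA" "k < MA" and bj: "b < NB" "j < MB" for a k b j
  proof -
    have "trace (kron (EA a k) (EB b j) ** \<rho>)
       = (\<Sum>i<r. complex_of_real (p i) * (trace (EA a k ** \<rho>A i) * trace (EB b j ** \<rho>B i)))"
      unfolding rho trace_mult_sum trace_mult_scal kron_trace ..
    then have "Re (trace (kron (EA a k) (EB b j) ** \<rho>))
       = (\<Sum>i<r. Re (complex_of_real (p i) * (trace (EA a k ** \<rho>A i) * trace (EB b j ** \<rho>B i))))"
      by simp
    also have "\<dots> = (\<Sum>i<r. p i * (\<alpha> i a k * \<beta> i b j))"
    proof (rule sum.cong[OF refl])
      fix i assume "i \<in> {..<r}"
      then have i: "i < r" by simp
      have "Im (trace (EA a k ** \<rho>A i)) = 0" by (rule trace_herm_real[OF hEA[OF ak] hA(1)[OF i]])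
      moreover have "Im (trace (EB b j ** \<rho>B i)) = 0" by (rule trace_herm_real[OF hEB[OF bj] hA(2)[OF i]])
      ultimately show "Re (complex_of_real (p i) * (trace (EA a k ** \<rho>A i) * trace (EB b j ** \<rho>B i))) = p i * (\<alpha> i a k * \<beta> i b j)"
        by (simp add: \<alpha>_def \<beta>_def)
    qed
    finally show ?thesis .
  qed
  have bA: "(\<Sum>a<NA. \<Sum>k<MA. (\<alpha> i a k)^2) \<le> CA" if "i < r" for i
    unfolding \<alpha>_def CA_def by (rule single_bound[OF assms(1)]) (use hp that in auto)
  have bB: "(\<Sum>b<NB. \<Sum>j<MB. (\<beta> i b j)^2) \<le> CB" if "i < r" for i
    unfolding \<beta>_def CB_def by (rule single_bound[OF assms(2)]) (use hp that in auto)
  have "(\<Sum>a<NA. \<Sum>k<MA. \<Sum>b<NB. \<Sum>j<MB. (Re (trace (kron (EA a k) (EB b j) ** \<rho>))) ^ 2)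
      = (\<Sum>a<NA. \<Sum>k<MA. \<Sum>b<NB. \<Sum>j<MB. (\<Sum>i<r. p i * (\<alpha> i a k * \<beta> i b j))^2)"
    by (intro sum.cong refl) (simp add: key)
  also have "\<dots> \<le> (\<Sum>a<NA. \<Sum>k<MA. \<Sum>b<NB. \<Sum>j<MB. \<Sum>i<r. p i * (\<alpha> i a k * \<beta> i b j)^2)"
    by (intro sum_mono jensen_sq) (use hp ps in auto)
  also have "\<dots> = (\<Sum>i<r. \<Sum>a<NA. \<Sum>k<MA. \<Sum>b<NB. \<Sum>j<MB. p i * (\<alpha> i a k * \<beta> i b j)^2)"
    by (rule sum_swap5[symmetric])
  also have "\<dots> = (\<Sum>i<r. p i * ((\<Sum>a<NA. \<Sum>k<MA. (\<alpha> i a k)^2) * (\<Sum>b<NB. \<Sum>j<MB. (\<beta> i b j)^2)))"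
  proof (rule sum.cong[OF refl])
    fix i
    have "(\<Sum>a<NA. \<Sum>k<MA. (\<alpha> i a k)^2) * (\<Sum>b<NB. \<Sum>j<MB. (\<beta> i b j)^2)
        = (\<Sum>a<NA. \<Sum>k<MA. (\<alpha> i a k)^2 * (\<Sum>b<NB. \<Sum>j<MB. (\<beta> i b j)^2))"
      by (simp only: sum_distrib_right)
    also have "\<dots> = (\<Sum>a<NA. \<Sum>k<MA. \<Sum>b<NB. \<Sum>j<MB. (\<alpha> i a k)^2 * (\<beta> i b j)^2)"
      by (simp only: sum_distrib_left)
    finally have "p i * ((\<Sum>a<NA. \<Sum>k<MA. (\<alpha> i a k)^2) * (\<Sum>b<NB. \<Sum>j<MB. (\<beta> i b j)^2))
        = (\<Sum>a<NA. \<Sum>k<MA. \<Sum>b<NB. \<Sum>j<MB. p i * ((\<alpha> i a k)^2 * (\<beta> i b j)^2))"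
      by (simp only: sum_distrib_left)
    then show "(\<Sum>a<NA. \<Sum>k<MA. \<Sum>b<NB. \<Sum>j<MB. p i * (\<alpha> i a k * \<beta> i b j)^2)
        = p i * ((\<Sum>a<NA. \<Sum>k<MA. (\<alpha> i a k)^2) * (\<Sum>b<NB. \<Sum>j<MB. (\<beta> i b j)^2))"
      by (simp add: power_mult_distrib)
  qed
  also have "\<dots> \<le> (\<Sum>i<r. p i * (CA * CB))"
  proof (rule sum_mono)
    fix i assume "i \<in> {..<r}"
    then have i: "i < r" by simp
    have "0 \<le> (\<Sum>a<NA. \<Sum>k<MA. (\<alpha> i a k)^2)" by (intro sum_nonneg) auto
    moreover have "0 \<le> (\<Sum>b<NB. \<Sum>j<MB. (\<beta> i b j)^2)" by (intro sum_nonneg) auto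
    ultimately have "(\<Sum>a<NA. \<Sum>k<MA. (\<alpha> i a k)^2) * (\<Sum>b<NB. \<Sum>j<MB. (\<beta> i b j)^2) \<le> CA * CB"
      using bA[OF i] bB[OF i] by (meson mult_mono order_trans)
    then show "p i * ((\<Sum>a<NA. \<Sum>k<MA. (\<alpha> i a k)^2) * (\<Sum>b<NB. \<Sum>j<MB. (\<beta> i b j)^2)) \<le> p i * (CA * CB)"
      using hp i by (simp add: mult_left_mono)
  qed
  also have "\<dots> = CA * CB" using ps by (simp flip: sum_distrib_right)
  finally show ?thesis unfolding CA_def CB_def .
qed


end
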